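(* Let $P$ be a finite lattice with bottom element $\perp$. Restriction $R\mapsto R|_{P\setminus\{\perp\}}$ is a bijection from the set of transfer systems $R$ on $P$ satisfying $\perp\,R\,a$ for all $a\in P$ onto the set of transfer systems on the poset $P\setminus\{\perp\}$; its inverse sends a transfer system $Q$ on $P\setminus\{\perp\}$ to $Q$ together with all relations $\perp\,\tilde Q\,a$, $a\in P$.
   Context: A transfer system on a finite lattice $(P,\le)$ is a partial order $R$ refining $\le$ closed under restriction: $x\,R\,z$ and $y\le z$ imply $(x\wedge y)\,R\,y$. For a finite poset $(S,\le)$ (not necessarily a lattice), a transfer system on $S$ is a partial order $R$ on $S$ refining $\le$ such that whenever $x\,R\,y$ and $z\le y$, then $w\,R\,z$ for every $w$ that is maximal among common lower bounds of $x$ and $z$ (vacuous if there is none); when $x\wedge z$ exists this agrees with the lattice definition. *)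

theory Defs
  imports Main
begin

definition transfer_system_lattice :: "('a::lattice) rel \<Rightarrow> bool" where
  "transfer_system_lattice R \<longleftrightarrow>
     R \<subseteq> {(x, y). x \<le> y} \<and>
     (\<forall>x. (x, x) \<in> R) \<and> antisym R \<and> trans R \<and>
     (\<forall>x y z. (x, z) \<in> R \<longrightarrow> y \<le> z \<longrightarrow> (inf x y, y) \<in> R)"

definition max_common_lower :: "('a::order) set \<Rightarrow> 'a \<Rightarrow> 'a \<Rightarrow> 'a set" where
  "max_common_lower S x z =
     {w \<in> S. w \<le> x \<and> w \<le> z \<and> \<not> (\<exists>v \<in> S. v \<le> x \<and> v \<le> z \<and> w < v)}"

definition transfer_system_on :: "('a::order) set \<Rightarrow> 'a rel \<Rightarrow> bool" where
  "transfer_system_on S R \<longleftrightarrow>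
     R \<subseteq> {(x, y). x \<in> S \<and> y \<in> S \<and> x \<le> y} \<and>
     (\<forall>x \<in> S. (x, x) \<in> R) \<and> antisym R \<and> trans R \<and>
     (\<forall>x y z w. (x, y) \<in> R \<longrightarrow> z \<in> S \<longrightarrow> z \<le> y \<longrightarrow>
        w \<in> max_common_lower S x z \<longrightarrow> (w, z) \<in> R)"

end

theory Submission
  imports Defs
begin

lemma ext_ts:
  fixes Q :: "('a::bounded_lattice_bot) rel"
  assumes Q: "transfer_system_on (UNIV - {bot}) Q"
  shows "transfer_system_lattice (Q \<union> {(bot, a) | a. True})"
proof -
  let ?S = "(UNIV::'a set) - {bot}"
  let ?E = "Q \<union> {(bot, a) | a. True}"
  have sub: "Q \<subseteq> {(x, y). x \<in> ?S \<and> y \<in> ?S \<and> x \<le> y}" and refl: "\<forall>x \<in> ?S. (x, x) \<in> Q"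
    and anti: "antisym Q" and tr: "trans Q"
    and res: "\<And>x y z w. (x, y) \<in> Q \<Longrightarrow> z \<in> ?S \<Longrightarrow> z \<le> y \<Longrightarrow>
        w \<in> max_common_lower ?S x z \<Longrightarrow> (w, z) \<in> Q"
    using Q unfolding transfer_system_on_def by blast+
  have a1: "?E \<subseteq> {(x, y). x \<le> y}" using sub by auto
  have a2: "\<forall>x. (x, x) \<in> ?E" using refl by auto
  have a3: "antisym ?E"
    unfolding antisym_def using anti sub by (auto simp: antisym_def)
  have a4: "trans ?E"
  proof (rule transI)
    fix x y z assume xy: "(x, y) \<in> ?E" and yz: "(y, z) \<in> ?E"
    show "(x, z) \<in> ?E"
    proof (cases "x = bot")
      case True then show ?thesis by auto
    next
      case False
      then have "(x, y) \<in> Q" using xy by auto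
      then have "y \<noteq> bot" using sub by auto
      then have "(y, z) \<in> Q" using yz by auto
      then show ?thesis using \<open>(x, y) \<in> Q\<close> tr by (auto dest: transD)
    qed
  qed
  have a5: "\<forall>x y z. (x, z) \<in> ?E \<longrightarrow> y \<le> z \<longrightarrow> (inf x y, y) \<in> ?E"
  proof (intro allI impI)
    fix x y z assume xz: "(x, z) \<in> ?E" and yz: "y \<le> z"
    show "(inf x y, y) \<in> ?E"
    proof (cases "inf x y = bot")
      case True then show ?thesis by auto
    next
      case False
      then have "x \<noteq> bot" by auto
      then have xzQ: "(x, z) \<in> Q" using xz by auto
      have ny: "y \<noteq> bot" using False by (metis inf_bot_right)
      have "inf x y \<in> max_common_lower ?S x y"
        unfolding max_common_lower_def using False
        apply (simp add: less_le_not_le)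
        apply (intro ballI impI)
        apply (rule order.antisym)
         apply (simp add: inf_greatest)
        apply assumption
        done
      then have "(inf x y, y) \<in> Q" using res[OF xzQ _ yz] ny by auto
      then show ?thesis by auto
    qed
  qed
  show ?thesis unfolding transfer_system_lattice_def by (intro conjI a1 a2 a3 a4 a5)
qed

lemma restr_ts:
  fixes R :: "('a::bounded_lattice_bot) rel"
  assumes R: "transfer_system_lattice R"
  shows "transfer_system_on (UNIV - {bot}) (R \<inter> ((UNIV - {bot}) \<times> (UNIV - {bot})))"
proof -
  let ?S = "(UNIV::'a set) - {bot}"
  let ?Q = "R \<inter> (?S \<times> ?S)"
  have sub: "R \<subseteq> {(x, y). x \<le> y}" and refl: "\<forall>x. (x, x) \<in> R" and anti: "antisym R"
    and tr: "trans R" and res: "\<And>x y z. (x, z) \<in> R \<Longrightarrow> y \<le> z \<Longrightarrow> (inf x y, y) \<in> R"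
    using R unfolding transfer_system_lattice_def by blast+
  have b1: "?Q \<subseteq> {(x, y). x \<in> ?S \<and> y \<in> ?S \<and> x \<le> y}" using sub by auto
  have b2: "\<forall>x \<in> ?S. (x, x) \<in> ?Q" using refl by auto
  have b3: "antisym ?Q" using anti by (auto simp: antisym_def)
  have b4: "trans ?Q" using tr by (auto simp: trans_def)
  have b5: "\<forall>x y z w. (x, y) \<in> ?Q \<longrightarrow> z \<in> ?S \<longrightarrow> z \<le> y \<longrightarrow>
        w \<in> max_common_lower ?S x z \<longrightarrow> (w, z) \<in> ?Q"
  proof (intro allI impI)
    fix x y z w assume xy: "(x, y) \<in> ?Q" and zS: "z \<in> ?S" and zy: "z \<le> y"
      and w: "w \<in> max_common_lower ?S x z"
    have wS: "w \<in> ?S" and wx: "w \<le> x" and wz: "w \<le> z"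
      and mx: "\<not> (\<exists>v \<in> ?S. v \<le> x \<and> v \<le> z \<and> w < v)"
      using w unfolding max_common_lower_def by auto
    have wle: "w \<le> inf x z" using wx wz by simp
    have iS: "inf x z \<in> ?S" proof -
      have "inf x z \<noteq> bot"
      proof
        assume "inf x z = bot" then have "w = bot" using wle by (simp add: bot_unique)
        then show False using wS by simp
      qed
      then show ?thesis by simp
    qed
    have "w = inf x z" using mx iS wle by (auto simp: less_le)
    moreover have "(inf x z, z) \<in> R" using res xy zy by auto
    ultimately show "(w, z) \<in> ?Q" using wS zS by auto
  qed
  show ?thesis unfolding transfer_system_on_def by (intro conjI b1 b2 b3 b4 b5)
qed

theorem lemma4p8:
  fixes dummy :: "'a::{finite, bounded_lattice_bot}"
  defines "S \<equiv> (UNIV :: 'a set) - {bot}"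
  defines "restr \<equiv> (\<lambda>R :: 'a rel. R \<inter> (S \<times> S))"
  defines "ext \<equiv> (\<lambda>Q :: 'a rel. Q \<union> {(bot, a) | a. True})"
  shows "bij_betw restr {R. transfer_system_lattice R \<and> (\<forall>a. (bot, a) \<in> R)}
                        {Q. transfer_system_on S Q}
       \<and> (\<forall>Q. transfer_system_on S Q \<longrightarrow>
              transfer_system_lattice (ext Q) \<and> (\<forall>a. (bot, a) \<in> ext Q) \<and> restr (ext Q) = Q)
       \<and> (\<forall>R. transfer_system_lattice R \<and> (\<forall>a. (bot, a) \<in> R) \<longrightarrow> ext (restr R) = R)"
proof -
  have P2: "\<forall>Q. transfer_system_on S Q \<longrightarrow>
              transfer_system_lattice (ext Q) \<and> (\<forall>a. (bot, a) \<in> ext Q) \<and> restr (ext Q) = Q"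
  proof (intro allI impI)
    fix Q assume Q: "transfer_system_on S Q"
    have "Q \<subseteq> {(x, y). x \<in> S \<and> y \<in> S \<and> x \<le> y}" using Q unfolding transfer_system_on_def by (elim conjE)
    then have QS: "Q \<subseteq> S \<times> S" by blast
    have t1: "transfer_system_lattice (ext Q)" using ext_ts[of Q] Q unfolding S_def ext_def by simp
    have t2: "\<forall>a. (bot, a) \<in> ext Q" unfolding ext_def by blast
    have t3: "restr (ext Q) = Q" unfolding restr_def ext_def using QS unfolding S_def by blast
    show "transfer_system_lattice (ext Q) \<and> (\<forall>a. (bot, a) \<in> ext Q) \<and> restr (ext Q) = Q"
      by (intro conjI t1 t2 t3)
  qed
  have P3: "\<forall>R. transfer_system_lattice R \<and> (\<forall>a. (bot, a) \<in> R) \<longrightarrow> ext (restr R) = R"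
  proof (intro allI impI)
    fix R :: "'a rel" assume R: "transfer_system_lattice R \<and> (\<forall>a. (bot, a) \<in> R)"
    have sub: "R \<subseteq> {(x, y). x \<le> y}" using R unfolding transfer_system_lattice_def by blast
    show "ext (restr R) = R"
    proof
      show "ext (restr R) \<subseteq> R" using R unfolding ext_def restr_def by auto
      show "R \<subseteq> ext (restr R)"
      proof
        fix p assume p: "p \<in> R"
        obtain x y where pe: "p = (x, y)" by force
        show "p \<in> ext (restr R)"
        proof (cases "x = bot")
          case True then show ?thesis unfolding ext_def pe by auto
        next
          case False
          have "x \<le> y" using sub p pe by auto
          then have "y \<noteq> bot" using False by (auto simp: bot_unique)
          then show ?thesis using False p pe unfolding ext_def restr_def S_def by auto
        qed
      qed
    qed
  qed
  have P1: "bij_betw restr {R. transfer_system_lattice R \<and> (\<forall>a. (bot, a) \<in> R)}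
                        {Q. transfer_system_on S Q}"
  proof (rule bij_betwI')
    fix x y :: "'a rel" assume "x \<in> {R. transfer_system_lattice R \<and> (\<forall>a. (bot, a) \<in> R)}"
      "y \<in> {R. transfer_system_lattice R \<and> (\<forall>a. (bot, a) \<in> R)}"
    then have "ext (restr x) = x" "ext (restr y) = y" using P3 by blast+
    then show "(restr x = restr y) = (x = y)" by metis
  next
    fix x :: "'a rel" assume "x \<in> {R. transfer_system_lattice R \<and> (\<forall>a. (bot, a) \<in> R)}"
    then show "restr x \<in> {Q. transfer_system_on S Q}"
      using restr_ts[of x] unfolding restr_def S_def by auto
  next
    fix y assume "y \<in> {Q. transfer_system_on S Q}"
    then have "transfer_system_lattice (ext y) \<and> (\<forall>a. (bot, a) \<in> ext y) \<and> restr (ext y) = y"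
      using P2 by blast
    then show "\<exists>x\<in>{R. transfer_system_lattice R \<and> (\<forall>a. (bot, a) \<in> R)}. y = restr x"
      by (intro bexI[of _ "ext y"]) auto
  qed
  show ?thesis by (intro conjI P1 P2 P3)
qed

end
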